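(* Let $sc_2(\mathcal{D}_n)$ be the number of saturated chains of length 2 in the Dyck lattice $\mathcal{D}_n$. Then $$ \sum_{n\ge0} sc_2(\mathcal{D}_n)x^n=\frac{1-6x+6x^2-(1-4x)\sqrt{1-4x}}{-(1-4x)\sqrt{1-4x}}, $$ and for every $n\ge1$, $$ sc_2(\mathcal{D}_n)=\binom{2n}{n}\frac{(n-1)(n-2)}{2(2n-1)}. $$
   Context: A Dyck path of semilength $n$ is a lattice path from $(0,0)$ to $(2n,0)$ with steps $(1,1)$ and $(1,-1)$ never going below the $x$-axis. $\mathcal{D}_n$ is the set of Dyck paths of semilength $n$ ordered by containment: $\gamma\le\gamma'$ iff $\gamma$ lies weakly below $\gamma'$. A saturated chain of length $h$ is a sequence $\gamma^{(0)}<\cdots<\gamma^{(h)}$ in which each element covers the previous one. *)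

theory Defs
  imports Complex_Main
begin

text \<open>A lattice path is a list of steps: True = up step (1,1), False = down step (1,-1).\<close>

definition height :: "bool list \<Rightarrow> nat \<Rightarrow> int" where
  "height p i = (\<Sum>s\<leftarrow>take i p. if s then 1 else -1)"

definition dyck_paths :: "nat \<Rightarrow> bool list set" where
  "dyck_paths n = {p. length p = 2 * n \<and> (\<forall>i\<le>2 * n. height p i \<ge> 0) \<and> height p (2 * n) = 0}"

definition path_le :: "bool list \<Rightarrow> bool list \<Rightarrow> bool" where
  "path_le p q = (\<forall>i\<le>length p. height p i \<le> height q i)"

definition path_less :: "bool list \<Rightarrow> bool list \<Rightarrow> bool" where
  "path_less p q = (path_le p q \<and> p \<noteq> q)"

definition covers_in :: "nat \<Rightarrow> bool list \<Rightarrow> bool list \<Rightarrow> bool" where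
  "covers_in n p q = (p \<in> dyck_paths n \<and> q \<in> dyck_paths n \<and> path_less p q \<and>
     \<not> (\<exists>r\<in>dyck_paths n. path_less p r \<and> path_less r q))"

definition sat_chains2 :: "nat \<Rightarrow> (bool list \<times> bool list \<times> bool list) set" where
  "sat_chains2 n = {(a, b, c). covers_in n a b \<and> covers_in n b c}"

definition sc2 :: "nat \<Rightarrow> nat" where
  "sc2 n = card (sat_chains2 n)"

end

theory Submission
  imports Defs "HOL-Computational_Algebra.Formal_Power_Series" "HOL-Analysis.Generalised_Binomial_Theorem"
begin

lemma height_0[simp]: "height p 0 = 0" by (simp add: height_def)
lemma height_Nil[simp]: "height [] k = 0" by (simp add: height_def)
lemma height_Cons_Suc[simp]: "height (x#p) (Suc k) = (if x then 1 else -1) + height p k"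
  by (simp add: height_def)
lemma height_ge_len: "length p \<le> k \<Longrightarrow> height p k = height p (length p)"
  by (simp add: height_def)
lemma height_step: "k < length p \<Longrightarrow> height p (Suc k) = height p k + (if p!k then 1 else -1)"
  by (simp add: height_def take_Suc_conv_app_nth)
lemma height_append: "height (xs @ ys) (length xs + k) = height xs (length xs) + height ys k"
  by (simp add: height_def)

lemma allSuc_le: "(\<forall>i\<le>Suc n. P i) \<longleftrightarrow> P 0 \<and> (\<forall>i\<le>n. P (Suc i))"
proof (intro iffI conjI allI impI)
  fix i assume "P 0 \<and> (\<forall>i\<le>n. P (Suc i))" "i \<le> Suc n"
  then show "P i" by (cases i) auto
qed auto

fun okh :: "nat \<Rightarrow> bool list \<Rightarrow> bool" where
  "okh h [] = (h = 0)"
| "okh h (x#p) = (if x then okh (Suc h) p else (h > 0 \<and> okh (h-1) p))"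

lemma okh_iff: "okh h p \<longleftrightarrow> (\<forall>i\<le>length p. int h + height p i \<ge> 0) \<and> int h + height p (length p) = 0"
proof (induction p arbitrary: h)
  case Nil then show ?case by auto
next
  case (Cons x p)
  have A: "(\<forall>i\<le>length (x#p). int h + height (x#p) i \<ge> 0) \<longleftrightarrow>
        (\<forall>i\<le>length p. int h + height (x#p) (Suc i) \<ge> 0)"
    by (simp only: length_Cons allSuc_le) simp
  show ?case
  proof (cases x)
    case True
    then show ?thesis using Cons.IH[of "Suc h"] A by (simp add: algebra_simps)
  next
    case False
    show ?thesis
    proof (cases "h > 0")
      case True
      then show ?thesis using Cons.IH[of "h-1"] A \<open>\<not>x\<close> by (simp add: algebra_simps of_nat_diff)
    next
      case False
      then have "h = 0" by simp
      then show ?thesis using A \<open>\<not>x\<close> by (auto dest: spec[of _ 0])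
    qed
  qed
qed

lemma dyck_iff: "p \<in> dyck_paths n \<longleftrightarrow> length p = 2*n \<and> okh 0 p"
  by (auto simp: dyck_paths_def okh_iff)

lemma okh_append: "okh a xs \<Longrightarrow> okh b ys \<Longrightarrow> okh (a+b) (xs @ ys)"
proof (induction xs arbitrary: a)
  case Nil then show ?case by simp
next
  case (Cons x xs)
  show ?case
  proof (cases x)
    case True then show ?thesis using Cons.IH[of "Suc a"] Cons.prems by simp
  next
    case False
    then have "a > 0" "okh (a-1) xs" using Cons.prems by auto
    then show ?thesis using Cons.IH[of "a-1"] Cons.prems False by (simp add: Suc_diff_Suc)
  qed
qed

lemma okh_append_rest: "okh a xs \<Longrightarrow> okh a (xs @ ys) \<Longrightarrow> okh 0 ys"
  by (induction xs arbitrary: a) (auto split: if_splits)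

lemma okh_split: "okh (Suc h) p \<Longrightarrow> \<exists>b c. p = b @ False # c \<and> okh 0 b \<and> okh h c"
proof (induction "length p" arbitrary: p h rule: less_induct)
  case less
  show ?case
  proof (cases p)
    case Nil then show ?thesis using less.prems by simp
  next
    case (Cons x p')
    show ?thesis
    proof (cases x)
      case False
      then show ?thesis using less.prems Cons by (intro exI[of _ "[]"] exI[of _ p']) auto
    next
      case True
      then have "okh (Suc (Suc h)) p'" using less.prems Cons by simp
      from less.hyps[OF _ this] Cons obtain b1 c1 where 1: "p' = b1 @ False # c1" "okh 0 b1" "okh (Suc h) c1"
        by auto
      from less.hyps[OF _ 1(3)] 1 Cons obtain b2 c2 where 2: "c1 = b2 @ False # c2" "okh 0 b2" "okh h c2"
        by auto
      have "okh 0 (True # b1 @ False # b2)"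
        using okh_append[OF 1(2), of 1 "False # b2"] 2(2) by simp
      then show ?thesis using 1 2 Cons True by (intro exI[of _ "True # b1 @ False # b2"] exI[of _ c2]) auto
    qed
  qed
qed

lemma okh_split_unique:
  assumes "b @ False # c = b' @ False # c'" "okh 0 b" "okh 0 b'"
  shows "b = b'"
proof (rule ccontr)
  assume ne: "b \<noteq> b'"
  { fix b b' c c' assume e: "b @ False # c = b' @ False # c'" and o: "okh 0 b" "okh 0 b'"
      and l: "length b < length b'"
    have t: "take (length b) b' = b" using arg_cong[OF e, of "take (length b)"] l by simp
    have nth: "b' ! length b = False" using arg_cong[OF e, of "\<lambda>x. x ! length b"] l by (simp add: nth_append)
    have "b' = b @ False # drop (Suc (length b)) b'" using id_take_nth_drop[OF l] t nth by simp
    then obtain r where "b' = b @ False # r" by blast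
    hence False using okh_append_rest[OF o(1), of "False # r"] o(2) by simp }
  note * = this
  show False
  proof (cases "length b < length b'")
    case True then show ?thesis using * assms by blast
  next
    case False
    moreover have "length b \<noteq> length b'" using assms(1) ne by (metis append_eq_append_conv)
    ultimately show ?thesis using *[of b' c' b c] assms by simp
  qed
qed


definition flip :: "nat \<Rightarrow> bool list \<Rightarrow> bool list" where
  "flip i p = p[i := \<not> p!i, Suc i := \<not> p!(Suc i)]"
definition Vs :: "bool list \<Rightarrow> nat set" where
  "Vs p = {i. Suc i < length p \<and> \<not> p!i \<and> p!Suc i}"
definition Ps :: "bool list \<Rightarrow> nat set" where
  "Ps p = {i. Suc i < length p \<and> p!i \<and> \<not> p!Suc i}"
definition HPs :: "bool list \<Rightarrow> nat set" where
  "HPs p = {i. Suc i < length p \<and> p!i \<and> \<not> p!Suc i \<and> height p (Suc i) \<ge> 2}"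

lemma length_flip[simp]: "length (flip i p) = length p" by (simp add: flip_def)

lemma height_Suc_ge: "length p \<le> k \<Longrightarrow> height p (Suc k) = height p k"
  by (simp add: height_def)

lemma nth_flip: "Suc i < length p \<Longrightarrow> k < length p \<Longrightarrow>
   flip i p ! k = (if k = i \<or> k = Suc i then \<not> p!k else p!k)"
  by (auto simp: flip_def nth_list_update)

lemma height_flip:
  assumes "Suc i < length p" "p!i \<noteq> p!Suc i"
  shows "height (flip i p) k = height p k + (if k = Suc i then (if p!i then -2 else 2) else 0)"
proof (induction k)
  case 0 then show ?case by simp
next
  case (Suc k)
  show ?case
  proof (cases "k < length p")
    case True
    then have "height (flip i p) (Suc k) = height (flip i p) k + (if flip i p!k then 1 else -1)"
      by (simp add: height_step)
    moreover have "height p (Suc k) = height p k + (if p!k then 1 else -1)"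
      using True by (simp add: height_step)
    ultimately show ?thesis using Suc.IH True assms nth_flip[OF assms(1) True]
      by (auto split: if_splits)
  next
    case False
    then show ?thesis using Suc.IH assms height_Suc_ge[of p k] height_Suc_ge[of "flip i p" k]
      by auto
  qed
qed

lemma flip_flip: "Suc i < length p \<Longrightarrow> flip i (flip i p) = p"
  by (intro nth_equalityI) (auto simp: nth_flip)

lemma height_parity: "k \<le> length p \<Longrightarrow> even (height p k + int k)"
proof (induction k)
  case 0 then show ?case by simp
next
  case (Suc k)
  then have "even (height p k + int k)" by simp
  then show ?case using Suc.prems by (auto simp: height_step)
qed

lemma heights_eq_imp_eq:
  assumes "length p = length q" "\<And>k. k \<le> length p \<Longrightarrow> height p k = height q k"
  shows "p = q"
proof (rule nth_equalityI)
  show "length p = length q" by fact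
  fix k assume k: "k < length p"
  have "height p (Suc k) = height q (Suc k)" "height p k = height q k" using assms k by auto
  then show "p!k = q!k" using k assms(1) by (auto simp: height_step split: if_splits)
qed

lemma path_le_iff: "path_le p q \<longleftrightarrow> (\<forall>i\<le>length p. height p i \<le> height q i)"
  by (simp add: path_le_def)

lemma dyck_len: "p \<in> dyck_paths n \<Longrightarrow> length p = 2*n" by (simp add: dyck_paths_def)
lemma dyck_h: "p \<in> dyck_paths n \<Longrightarrow> height p k \<ge> 0"
  by (cases "k \<le> 2*n") (auto simp: dyck_paths_def height_ge_len[of p k])
lemma dyck_end: "p \<in> dyck_paths n \<Longrightarrow> height p (length p) = 0"
  by (simp add: dyck_paths_def)

lemma dyck_by_heights: "length p = 2*n \<Longrightarrow> (\<And>k. height p k \<ge> 0) \<Longrightarrow> height p (length p) = 0 \<Longrightarrow> p \<in> dyck_paths n"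
  by (simp add: dyck_paths_def)

lemma valley_cover:
  assumes p: "p \<in> dyck_paths n" and i: "i \<in> Vs p"
  shows "covers_in n p (flip i p)"
proof -
  have il: "Suc i < length p" "\<not> p!i" "p!Suc i" using i by (auto simp: Vs_def)
  note hf = height_flip[OF il(1), simplified il]
  have q: "flip i p \<in> dyck_paths n"
    using p hf il dyck_end[OF p] dyck_len[OF p] by (intro dyck_by_heights) (auto simp: dyck_h add_nonneg_nonneg)
  have ne: "p \<noteq> flip i p" using il nth_flip[OF il(1), of i] by auto
  have le: "path_le p (flip i p)" using hf by (simp add: path_le_iff)
  have nr: "\<not> (\<exists>r\<in>dyck_paths n. path_less p r \<and> path_less r (flip i p))"
  proof
    assume "\<exists>r\<in>dyck_paths n. path_less p r \<and> path_less r (flip i p)"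
    then obtain r where r: "r \<in> dyck_paths n" "path_le p r" "p \<noteq> r" "path_le r (flip i p)" "r \<noteq> flip i p"
      by (auto simp: path_less_def)
    have lr: "length r = length p" using r p by (simp add: dyck_len)
    have b1: "height p k \<le> height r k" "height r k \<le> height p k + (if k = Suc i then 2 else 0)"
      if "k \<le> length p" for k
      using r(2,4) that lr hf by (auto simp: path_le_iff)
    have par: "even (height r (Suc i) - height p (Suc i))"
      using height_parity[of "Suc i" r] height_parity[of "Suc i" p] il lr
      by (metis (no_types) Suc_leD Suc_le_eq diff_add_cancel even_add even_diff add_diff_cancel_right)
    have "height r (Suc i) = height p (Suc i) \<or> height r (Suc i) = height p (Suc i) + 2"
      using b1[of "Suc i"] il par by (auto simp: even_iff_mod_2_eq_zero) presburger?
    then show False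
    proof
      assume h: "height r (Suc i) = height p (Suc i)"
      have "r = p" using b1 h lr by (intro heights_eq_imp_eq) (auto, smt (verit))
      then show False using r by simp
    next
      assume h: "height r (Suc i) = height p (Suc i) + 2"
      have "r = flip i p" using b1 h lr hf by (intro heights_eq_imp_eq) (auto, smt (verit))
      then show False using r by simp
    qed
  qed
  show ?thesis using p q ne le nr by (simp add: covers_in_def path_less_def)
qed


lemma exists_valley_below:
  assumes p: "p \<in> dyck_paths n" and q: "q \<in> dyck_paths n" and le: "path_le p q" and ne: "p \<noteq> q"
  shows "\<exists>i\<in>Vs p. path_le (flip i p) q"
proof -
  have lp: "length p = 2*n" and lq: "length q = 2*n" using p q by (auto simp: dyck_len)
  define K where "K = {k. k \<le> 2*n \<and> height p k < height q k}"
  have leh: "height p k \<le> height q k" if "k \<le> 2*n" for k using le that lp by (auto simp: path_le_iff)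
  have "K \<noteq> {}"
  proof
    assume "K = {}"
    then have "height p k = height q k" if "k \<le> length p" for k using leh that lp
      by (force simp: K_def)
    then have "p = q" using lp lq by (intro heights_eq_imp_eq) auto
    then show False using ne by simp
  qed
  moreover have "finite K" by (simp add: K_def)
  ultimately obtain k where kK: "k \<in> K" and kmin: "\<And>k'. k' \<in> K \<Longrightarrow> height p k \<le> height p k'"
  proof -
    have fi: "finite (height p ` K)" "height p ` K \<noteq> {}" using \<open>finite K\<close> \<open>K \<noteq> {}\<close> by auto
    obtain k where "k \<in> K" "height p k = Min (height p ` K)" using Min_in[OF fi] by auto
    then show ?thesis using that Min_le[OF fi(1)] by auto
  qed
  have k: "k \<le> 2*n" "height p k < height q k" using kK by (auto simp: K_def)
  have par: "height p k + 2 \<le> height q k"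
  proof -
    have "even (height q k - height p k)"
      using height_parity[of k p] height_parity[of k q] k lp lq
      by (metis diff_add_cancel even_add even_diff)
    then show ?thesis using k(2) by presburger
  qed
  have k0: "k \<noteq> 0" proof assume "k = 0" then show False using k by simp qed
  have kn: "k \<noteq> 2*n" using k dyck_end[OF p] dyck_end[OF q] lp lq by auto
  obtain j where kj: "k = Suc j" using k0 by (cases k) auto
  have jl: "Suc j < length p" using kj k kn lp by auto
  have s1: "height p k = height p j + (if p!j then 1 else -1)" using kj jl by (simp add: height_step)
  have s1q: "height q k = height q j + (if q!j then 1 else -1)" using kj jl lp lq by (simp add: height_step)
  have s2: "height p (Suc k) = height p k + (if p!k then 1 else -1)" using kj jl by (simp add: height_step)
  have s2q: "height q (Suc k) = height q k + (if q!k then 1 else -1)" using kj jl lp lq by (simp add: height_step)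
  have pj: "\<not> p!j"
  proof
    assume "p!j"
    then have "j \<in> K" using s1 s1q par kj k by (auto simp: K_def split: if_splits)
    then show False using kmin[of j] s1 \<open>p!j\<close> by auto
  qed
  have pk: "p!k"
  proof (rule ccontr)
    assume "\<not> p!k"
    then have "Suc k \<in> K" using s2 s2q par kj jl lp by (auto simp: K_def split: if_splits)
    then show False using kmin[of "Suc k"] s2 \<open>\<not> p!k\<close> by auto
  qed
  have jV: "j \<in> Vs p" using pj pk kj jl by (simp add: Vs_def)
  have "path_le (flip j p) q"
    using height_flip[OF jl] pj pk kj par leh lp by (auto simp: path_le_iff)
  then show ?thesis using jV by blast
qed

lemma cover_iff:
  "covers_in n p q \<longleftrightarrow> p \<in> dyck_paths n \<and> (\<exists>i\<in>Vs p. q = flip i p)"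
proof
  assume c: "covers_in n p q"
  then have p: "p \<in> dyck_paths n" and q: "q \<in> dyck_paths n" and le: "path_le p q" and ne: "p \<noteq> q"
    and nr: "\<not> (\<exists>r\<in>dyck_paths n. path_less p r \<and> path_less r q)"
    by (auto simp: covers_in_def path_less_def)
  obtain i where i: "i \<in> Vs p" "path_le (flip i p) q" using exists_valley_below[OF p q le ne] by blast
  have cf: "covers_in n p (flip i p)" using valley_cover[OF p i(1)] .
  then have "flip i p \<in> dyck_paths n" "path_less p (flip i p)" by (auto simp: covers_in_def)
  with nr i(2) have "flip i p = q" by (auto simp: path_less_def)
  then show "p \<in> dyck_paths n \<and> (\<exists>i\<in>Vs p. q = flip i p)" using p i by auto
next
  assume "p \<in> dyck_paths n \<and> (\<exists>i\<in>Vs p. q = flip i p)"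
  then show "covers_in n p q" using valley_cover by auto
qed

lemma covered_by_iff:
  assumes b: "b \<in> dyck_paths n"
  shows "covers_in n a b \<longleftrightarrow> (\<exists>i\<in>HPs b. a = flip i b)"
proof
  assume "covers_in n a b"
  then obtain i where a: "a \<in> dyck_paths n" and i: "i \<in> Vs a" and e: "b = flip i a"
    by (auto simp: cover_iff)
  have il: "Suc i < length a" "\<not> a!i" "a!Suc i" using i by (auto simp: Vs_def)
  have hb: "height b (Suc i) = height a (Suc i) + 2" using height_flip[OF il(1)] il e by simp
  have "i \<in> HPs b" using il e hb dyck_h[OF a, of "Suc i"] by (auto simp: HPs_def nth_flip)
  moreover have "a = flip i b" using e flip_flip il by simp
  ultimately show "\<exists>i\<in>HPs b. a = flip i b" by blast
next
  assume "\<exists>i\<in>HPs b. a = flip i b"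
  then obtain i where i: "i \<in> HPs b" and e: "a = flip i b" by blast
  have il: "Suc i < length b" "b!i" "\<not> b!Suc i" "height b (Suc i) \<ge> 2" using i by (auto simp: HPs_def)
  note hf = height_flip[OF il(1), simplified il]
  have a: "a \<in> dyck_paths n"
    using hf e il b dyck_end[OF b] dyck_len[OF b]
    by (intro dyck_by_heights) (auto simp: dyck_h)
  have "i \<in> Vs a" using il e by (auto simp: Vs_def nth_flip)
  moreover have "b = flip i a" using e flip_flip il by simp
  ultimately show "covers_in n a b" using a by (auto simp: cover_iff)
qed


lemma finite_dyck[simp]: "finite (dyck_paths n)"
proof -
  have "dyck_paths n \<subseteq> {xs. set xs \<subseteq> (UNIV::bool set) \<and> length xs = 2*n}"
    by (auto simp: dyck_paths_def)
  then show ?thesis using finite_lists_length_eq[of "UNIV::bool set" "2*n"] finite_subset by auto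
qed

lemma finite_Vs[simp]: "finite (Vs p)" by (rule finite_subset[of _ "{..<length p}"]) (auto simp: Vs_def)
lemma finite_HPs[simp]: "finite (HPs p)" by (rule finite_subset[of _ "{..<length p}"]) (auto simp: HPs_def)

lemma flip_inj:
  assumes "Suc i < length b" "Suc i' < length b" "b!i \<noteq> b!Suc i" "b!i' \<noteq> b!Suc i'" "flip i b = flip i' b"
  shows "i = i'"
proof (rule ccontr)
  assume ne: "i \<noteq> i'"
  { fix i i' assume a: "Suc i < length b" "Suc i' < length b" "b!i \<noteq> b!Suc i" "b!i' \<noteq> b!Suc i'"
      "flip i b = flip i' b" "i < i'"
    have il: "i < length b" using a(1) by simp
    have "flip i b ! i = (\<not> b!i)" using nth_flip[OF a(1) il] by simp
    moreover have "flip i' b ! i = b!i" using nth_flip[OF a(2) il] a(6) by simp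
    ultimately have False using a(5) by simp }
  then show False using assms ne by (metis linorder_neqE_nat)
qed

lemma sat_chains_eq:
  "sat_chains2 n = (\<Union>b\<in>dyck_paths n. (\<lambda>(i,j). (flip i b, b, flip j b)) ` (HPs b \<times> Vs b))"
proof (intro set_eqI iffI)
  fix t assume "t \<in> sat_chains2 n"
  then obtain a b c where t: "t = (a,b,c)" and ab: "covers_in n a b" and bc: "covers_in n b c"
    by (auto simp: sat_chains2_def)
  have b: "b \<in> dyck_paths n" using bc by (simp add: covers_in_def)
  obtain i where "i \<in> HPs b" "a = flip i b" using ab covered_by_iff[OF b] by auto
  moreover obtain j where "j \<in> Vs b" "c = flip j b" using bc cover_iff by auto
  ultimately show "t \<in> (\<Union>b\<in>dyck_paths n. (\<lambda>(i,j). (flip i b, b, flip j b)) ` (HPs b \<times> Vs b))"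
    using b t by auto
next
  fix t assume "t \<in> (\<Union>b\<in>dyck_paths n. (\<lambda>(i,j). (flip i b, b, flip j b)) ` (HPs b \<times> Vs b))"
  then obtain b i j where b: "b \<in> dyck_paths n" and i: "i \<in> HPs b" and j: "j \<in> Vs b"
    and t: "t = (flip i b, b, flip j b)" by auto
  have "covers_in n (flip i b) b" using covered_by_iff[OF b] i by auto
  moreover have "covers_in n b (flip j b)" using cover_iff b j by auto
  ultimately show "t \<in> sat_chains2 n" using t by (simp add: sat_chains2_def)
qed

lemma sc2_sum: "sc2 n = (\<Sum>b\<in>dyck_paths n. card (HPs b) * card (Vs b))"
proof -
  have "sc2 n = (\<Sum>b\<in>dyck_paths n. card ((\<lambda>(i,j). (flip i b, b, flip j b)) ` (HPs b \<times> Vs b)))"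
    unfolding sc2_def sat_chains_eq
    by (rule card_UN_disjoint) auto
  also have "\<dots> = (\<Sum>b\<in>dyck_paths n. card (HPs b \<times> Vs b))"
  proof (intro sum.cong refl card_image inj_onI)
    fix b x y
    assume "x \<in> HPs b \<times> Vs b" "y \<in> HPs b \<times> Vs b"
      "(\<lambda>(i,j). (flip i b, b, flip j b)) x = (\<lambda>(i,j). (flip i b, b, flip j b)) y"
    then show "x = y" using flip_inj[of "fst x" b "fst y"] flip_inj[of "snd x" b "snd y"]
      by (auto simp: HPs_def Vs_def prod_eq_iff)
  qed
  finally show ?thesis by (simp add: card_cartesian_product)
qed


fun vc :: "bool list \<Rightarrow> nat" where
  "vc [] = 0"
| "vc (x#p) = (if p \<noteq> [] \<and> \<not> x \<and> hd p then 1 else 0) + vc p"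
fun pc :: "bool list \<Rightarrow> nat" where
  "pc [] = 0"
| "pc (x#p) = (if p \<noteq> [] \<and> x \<and> \<not> hd p then 1 else 0) + pc p"
fun hpc :: "int \<Rightarrow> bool list \<Rightarrow> nat" where
  "hpc h [] = 0"
| "hpc h (x#p) = (if p \<noteq> [] \<and> x \<and> \<not> hd p \<and> h + 1 \<ge> 2 then 1 else 0) + hpc (if x then h+1 else h-1) p"

definition HPh :: "int \<Rightarrow> bool list \<Rightarrow> nat set" where
  "HPh h p = {i. Suc i < length p \<and> p!i \<and> \<not> p!Suc i \<and> h + height p (Suc i) \<ge> 2}"

lemma Vs_Cons: "Vs (x#p) = (if p \<noteq> [] \<and> \<not> x \<and> hd p then {0} else {}) \<union> Suc ` Vs p"
proof (intro set_eqI)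
  fix i show "i \<in> Vs (x#p) \<longleftrightarrow> i \<in> (if p \<noteq> [] \<and> \<not> x \<and> hd p then {0} else {}) \<union> Suc ` Vs p"
  proof (cases i)
    case 0 then show ?thesis by (cases p) (auto simp: Vs_def)
  next
    case (Suc j) then show ?thesis by (auto simp: Vs_def)
  qed
qed

lemma Vs_Nil[simp]: "Vs [] = {}" by (simp add: Vs_def)
lemma HPh_Nil[simp]: "HPh h [] = {}" by (simp add: HPh_def)

lemma card_Vs: "card (Vs p) = vc p"
proof (induction p)
  case Nil then show ?case by (simp add: Vs_def)
next
  case (Cons x p)
  have "card (Suc ` Vs p) = card (Vs p)" by (simp add: card_image)
  then show ?case using Cons by (auto simp: Vs_Cons card_insert_if)
qed

lemma HPh_Cons: "HPh h (x#p) = (if p \<noteq> [] \<and> x \<and> \<not> hd p \<and> h + 1 \<ge> 2 then {0} else {})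
     \<union> Suc ` HPh (if x then h+1 else h-1) p"
proof (intro set_eqI)
  fix i show "i \<in> HPh h (x#p) \<longleftrightarrow> i \<in> (if p \<noteq> [] \<and> x \<and> \<not> hd p \<and> h + 1 \<ge> 2 then {0} else {})
     \<union> Suc ` HPh (if x then h+1 else h-1) p"
  proof (cases i)
    case 0 then show ?thesis by (cases p) (auto simp: HPh_def)
  next
    case (Suc j) then show ?thesis by (auto simp: HPh_def algebra_simps)
  qed
qed

lemma finite_HPh[simp]: "finite (HPh h p)" by (rule finite_subset[of _ "{..<length p}"]) (auto simp: HPh_def)

lemma card_HPh: "card (HPh h p) = hpc h p"
proof (induction p arbitrary: h)
  case Nil then show ?case by (simp add: HPh_def)
next
  case (Cons x p)
  have "card (Suc ` HPh h' p) = card (HPh h' p)" for h' by (simp add: card_image)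
  then show ?case using Cons by (auto simp: HPh_Cons card_insert_if)
qed

lemma card_HPs: "card (HPs p) = hpc 0 p"
  using card_HPh[of 0 p] by (simp add: HPh_def HPs_def)

lemma vc_append: "vc (xs @ ys) = vc xs + vc ys + (if xs \<noteq> [] \<and> ys \<noteq> [] \<and> \<not> last xs \<and> hd ys then 1 else 0)"
  by (induction xs) auto

lemma pc_append: "pc (xs @ ys) = pc xs + pc ys + (if xs \<noteq> [] \<and> ys \<noteq> [] \<and> last xs \<and> \<not> hd ys then 1 else 0)"
  by (induction xs) auto

lemma hpc_append: "hpc h (xs @ ys) = hpc h xs + hpc (h + height xs (length xs)) ys +
   (if xs \<noteq> [] \<and> ys \<noteq> [] \<and> last xs \<and> \<not> hd ys \<and> h + height xs (length xs) \<ge> 2 then 1 else 0)"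
  by (induction xs arbitrary: h) (auto simp: algebra_simps)

lemma hpc_okh: "okh k b \<Longrightarrow> hpc (int k + 1) b = pc b"
proof (induction b arbitrary: k)
  case Nil then show ?case by simp
next
  case (Cons x p)
  show ?case
  proof (cases x)
    case True then show ?thesis using Cons.IH[of "Suc k"] Cons.prems by (simp add: algebra_simps)
  next
    case False then show ?thesis using Cons.IH[of "k - 1"] Cons.prems by (simp add: of_nat_diff)
  qed
qed

lemma okh_hd: "okh 0 b \<Longrightarrow> b \<noteq> [] \<Longrightarrow> hd b"
  by (cases b) (auto split: if_splits)

lemma okh_snoc_True: "\<not> okh h (ys @ [True])"
  by (induction ys arbitrary: h) (auto split: if_splits)

lemma okh_last: "okh 0 b \<Longrightarrow> b \<noteq> [] \<Longrightarrow> \<not> last b"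
  by (metis append_butlast_last_id okh_snoc_True)

lemma okh_end: "okh 0 b \<Longrightarrow> height b (length b) = 0"
  by (simp add: okh_iff)

definition cons2 :: "bool list \<Rightarrow> bool list \<Rightarrow> bool list" where
  "cons2 b c = True # b @ False # c"

lemma vc_cons2: "okh 0 b \<Longrightarrow> okh 0 c \<Longrightarrow> vc (cons2 b c) = vc b + vc c + (if c = [] then 0 else 1)"
  using okh_hd[of c] okh_last[of b]
  by (auto simp: cons2_def vc_append)

lemma pc_cons2: "okh 0 b \<Longrightarrow> okh 0 c \<Longrightarrow> pc (cons2 b c) = pc b + pc c + (if b = [] then 1 else 0)"
  using okh_hd[of b] okh_last[of b]
  by (cases "b = []") (auto simp: cons2_def pc_append)

lemma hpc_cons2: "okh 0 b \<Longrightarrow> okh 0 c \<Longrightarrow> hpc 0 (cons2 b c) = pc b + hpc 0 c"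
  using okh_hd[of b] okh_last[of b] okh_end[of b] hpc_okh[of 0 b]
  by (auto simp: cons2_def hpc_append)


lemma okh_even: "okh 0 b \<Longrightarrow> even (length b)"
  using height_parity[of "length b" b] okh_end[of b] by simp

lemma okh_cons2: "okh 0 b \<Longrightarrow> okh 0 c \<Longrightarrow> okh 0 (cons2 b c)"
  using okh_append[of 0 b 1 "False # c"] by (simp add: cons2_def)

lemma cons2_inj: "okh 0 b \<Longrightarrow> okh 0 b' \<Longrightarrow> cons2 b c = cons2 b' c' \<Longrightarrow> b = b' \<and> c = c'"
  using okh_split_unique[of b c b' c'] by (auto simp: cons2_def)

lemma dyck0: "dyck_paths 0 = {[]}" by (auto simp: dyck_iff)

definition SG :: "nat \<Rightarrow> (nat \<times> bool list \<times> bool list) set" where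
  "SG n = (SIGMA k:{..n}. dyck_paths k \<times> dyck_paths (n-k))"

lemma dyck_Suc_bij: "bij_betw (\<lambda>(k,b,c). cons2 b c) (SG n) (dyck_paths (Suc n))"
proof (rule bij_betw_imageI)
  show "inj_on (\<lambda>(k,b,c). cons2 b c) (SG n)"
  proof (rule inj_onI)
    fix x y
    assume a: "x \<in> SG n" "y \<in> SG n" "(\<lambda>(k,b,c). cons2 b c) x = (\<lambda>(k,b,c). cons2 b c) y"
    obtain k b c where x: "x = (k,b,c)" by (cases x) auto
    obtain k' b' c' where y: "y = (k',b',c')" by (cases y) auto
    have "b = b' \<and> c = c'" using cons2_inj[of b b' c c'] a x y by (auto simp: SG_def dyck_iff)
    moreover then have "k = k'" using a x y by (auto simp: SG_def dyck_iff)
    ultimately show "x = y" using x y by simp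
  qed
next
  show "(\<lambda>(k,b,c). cons2 b c) ` SG n = dyck_paths (Suc n)"
  proof (intro set_eqI iffI)
    fix a assume "a \<in> (\<lambda>(k,b,c). cons2 b c) ` SG n"
    then obtain k b c where "k \<le> n" "b \<in> dyck_paths k" "c \<in> dyck_paths (n-k)" "a = cons2 b c"
      by (auto simp: SG_def)
    then show "a \<in> dyck_paths (Suc n)" using okh_cons2 by (auto simp: dyck_iff cons2_def)
  next
    fix a assume a: "a \<in> dyck_paths (Suc n)"
    then have o: "okh 0 a" and l: "length a = 2 * Suc n" by (auto simp: dyck_iff)
    then obtain x a' where "a = x # a'" by (cases a) auto
    with o have x: "x" and o': "okh 1 a'" by (auto split: if_splits)
    obtain b c where bc: "a' = b @ False # c" "okh 0 b" "okh 0 c"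
      using okh_split[of 0 a'] o' by auto
    have e: "even (length b)" "even (length c)" using okh_even bc by auto
    define k where "k = length b div 2"
    have "length b = 2*k" using e k_def by simp
    moreover have "length c = 2*(n-k)" using l bc \<open>a = x#a'\<close> e calculation by auto
    moreover have "k \<le> n" using l bc \<open>a = x#a'\<close> calculation by auto
    ultimately show "a \<in> (\<lambda>(k,b,c). cons2 b c) ` SG n"
      using bc x \<open>a = x#a'\<close>
      by (intro image_eqI[of _ _ "(k,b,c)"]) (auto simp: SG_def dyck_iff cons2_def)
  qed
qed

lemma sum_dyck_Suc:
  "(\<Sum>a\<in>dyck_paths (Suc n). f a) = (\<Sum>k\<le>n. \<Sum>b\<in>dyck_paths k. \<Sum>c\<in>dyck_paths (n-k). f (cons2 b c))"
proof -
  have "(\<Sum>a\<in>dyck_paths (Suc n). f a) = (\<Sum>x\<in>SG n. f ((\<lambda>(k,b,c). cons2 b c) x))"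
    using sum.reindex_bij_betw[OF dyck_Suc_bij, of f] by simp
  also have "\<dots> = (\<Sum>(k,bc)\<in>SG n. f (cons2 (fst bc) (snd bc)))"
    by (intro sum.cong) auto
  also have "\<dots> = (\<Sum>k\<le>n. \<Sum>bc\<in>dyck_paths k \<times> dyck_paths (n-k). f (cons2 (fst bc) (snd bc)))"
    unfolding SG_def by (rule sum.Sigma[symmetric]) auto
  also have "\<dots> = (\<Sum>k\<le>n. \<Sum>b\<in>dyck_paths k. \<Sum>c\<in>dyck_paths (n-k). f (cons2 b c))"
    by (intro sum.cong refl) (simp add: sum.cartesian_product split_def)
  finally show ?thesis .
qed


unbundle fps_syntax

definition ST :: "(bool list \<Rightarrow> real) \<Rightarrow> real fps" where
  "ST f = Abs_fps (\<lambda>n. \<Sum>a\<in>dyck_paths n. f a)"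

lemma ST_nth: "ST f $ n = (\<Sum>a\<in>dyck_paths n. f a)" by (simp add: ST_def)

lemma prod_coeff: "(ST g * ST h) $ n = (\<Sum>k\<le>n. \<Sum>b\<in>dyck_paths k. \<Sum>c\<in>dyck_paths (n-k). g b * h c)"
  by (simp add: fps_mult_nth ST_nth atLeast0AtMost sum_product)

lemma ST_eq:
  assumes "\<And>b c. okh 0 b \<Longrightarrow> okh 0 c \<Longrightarrow> f (cons2 b c) = F b c"
    and "\<And>n. (\<Sum>k\<le>n. \<Sum>b\<in>dyck_paths k. \<Sum>c\<in>dyck_paths (n-k). F b c) = Y $ n"
  shows "ST f = fps_const (f []) + fps_X * Y"
proof (rule fps_ext)
  fix n show "ST f $ n = (fps_const (f []) + fps_X * Y) $ n"
  proof (cases n)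
    case 0 then show ?thesis by (simp add: ST_nth dyck0)
  next
    case (Suc m)
    have "ST f $ n = (\<Sum>k\<le>m. \<Sum>b\<in>dyck_paths k. \<Sum>c\<in>dyck_paths (m-k). f (cons2 b c))"
      using Suc by (simp add: ST_nth sum_dyck_Suc)
    also have "\<dots> = (\<Sum>k\<le>m. \<Sum>b\<in>dyck_paths k. \<Sum>c\<in>dyck_paths (m-k). F b c)"
      by (intro sum.cong refl) (auto simp: assms(1) dyck_iff)
    also have "\<dots> = Y $ m" by (rule assms(2))
    finally show ?thesis using Suc by simp
  qed
qed

abbreviation "GG \<equiv> ST (\<lambda>_. 1)"
definition ee :: "bool list \<Rightarrow> real" where "ee b = (if b = [] then 0 else 1)"
definition zz :: "bool list \<Rightarrow> real" where "zz b = (if b = [] then 1 else 0)"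
abbreviation "VV \<equiv> ST (\<lambda>b. real (vc b))"
abbreviation "PP \<equiv> ST (\<lambda>b. real (pc b))"
abbreviation "HH \<equiv> ST (\<lambda>b. real (hpc 0 b))"
abbreviation "UU \<equiv> ST (\<lambda>b. real (pc b) * real (vc b))"
abbreviation "MM \<equiv> ST (\<lambda>b. real (hpc 0 b) * real (vc b))"

lemma ST_zz: "ST zz = 1"
proof (rule fps_ext)
  fix n show "ST zz $ n = 1 $ n"
  proof (cases n)
    case 0 then show ?thesis by (simp add: ST_nth dyck0 zz_def)
  next
    case (Suc m)
    then have "a \<in> dyck_paths n \<Longrightarrow> zz a = 0" for a by (auto simp: zz_def dyck_iff)
    then show ?thesis using Suc by (simp add: ST_nth)
  qed
qed

lemma ST_ee: "ST ee = GG - 1"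
proof (rule fps_ext)
  fix n show "ST ee $ n = (GG - 1) $ n"
  proof (cases n)
    case 0 then show ?thesis by (simp add: ST_nth dyck0 ee_def)
  next
    case (Suc m)
    then have "a \<in> dyck_paths n \<Longrightarrow> ee a = 1" for a by (auto simp: ee_def dyck_iff)
    then show ?thesis using Suc by (simp add: ST_nth)
  qed
qed

lemma G_eq: "GG = 1 + fps_X * (GG * GG)"
  using ST_eq[of "\<lambda>_. 1" "\<lambda>b c. 1 * 1" "GG * GG"] by (simp only: prod_coeff) simp

lemma V_eq: "VV = fps_X * (VV * GG + GG * VV + GG * ST ee)"
proof -
  have "ST (\<lambda>b. real (vc b)) = fps_const (real (vc [])) + fps_X * (VV * GG + GG * VV + GG * ST ee)"
  proof (rule ST_eq)
    fix b c :: "bool list" assume "okh 0 b" "okh 0 c"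
    then show "real (vc (cons2 b c)) = real (vc b) * 1 + 1 * real (vc c) + 1 * ee c"
      by (simp add: vc_cons2 ee_def)
  next
    fix n show "(\<Sum>k\<le>n. \<Sum>b\<in>dyck_paths k. \<Sum>c\<in>dyck_paths (n-k). real (vc b) * 1 + 1 * real (vc c) + 1 * ee c)
       = (VV * GG + GG * VV + GG * ST ee) $ n"
      by (simp only: fps_add_nth prod_coeff sum.distrib)
  qed
  then show ?thesis by simp
qed

lemma P_eq: "PP = fps_X * (PP * GG + GG * PP + ST zz * GG)"
proof -
  have "ST (\<lambda>b. real (pc b)) = fps_const (real (pc [])) + fps_X * (PP * GG + GG * PP + ST zz * GG)"
  proof (rule ST_eq)
    fix b c :: "bool list" assume "okh 0 b" "okh 0 c"
    then show "real (pc (cons2 b c)) = real (pc b) * 1 + 1 * real (pc c) + zz b * 1"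
      by (simp add: pc_cons2 zz_def)
  next
    fix n show "(\<Sum>k\<le>n. \<Sum>b\<in>dyck_paths k. \<Sum>c\<in>dyck_paths (n-k). real (pc b) * 1 + 1 * real (pc c) + zz b * 1)
       = (PP * GG + GG * PP + ST zz * GG) $ n"
      by (simp only: fps_add_nth prod_coeff sum.distrib)
  qed
  then show ?thesis by simp
qed

lemma H_eq: "HH = fps_X * (PP * GG + GG * HH)"
proof -
  have "ST (\<lambda>b. real (hpc 0 b)) = fps_const (real (hpc 0 [])) + fps_X * (PP * GG + GG * HH)"
  proof (rule ST_eq)
    fix b c :: "bool list" assume "okh 0 b" "okh 0 c"
    then show "real (hpc 0 (cons2 b c)) = real (pc b) * 1 + 1 * real (hpc 0 c)"
      by (simp add: hpc_cons2)
  next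
    fix n show "(\<Sum>k\<le>n. \<Sum>b\<in>dyck_paths k. \<Sum>c\<in>dyck_paths (n-k). real (pc b) * 1 + 1 * real (hpc 0 c))
       = (PP * GG + GG * HH) $ n"
      by (simp only: fps_add_nth prod_coeff sum.distrib)
  qed
  then show ?thesis by simp
qed

lemma U_eq: "UU = fps_X * (UU * GG + PP * VV + PP * ST ee + VV * PP + GG * UU + GG * PP + ST zz * VV + ST zz * ST ee)"
proof -
  have "UU = fps_const (real (pc []) * real (vc [])) + fps_X * (UU * GG + PP * VV + PP * ST ee + VV * PP + GG * UU + GG * PP + ST zz * VV + ST zz * ST ee)"
  proof (rule ST_eq)
    fix b c :: "bool list" assume o: "okh 0 b" "okh 0 c"
    have "c = [] \<Longrightarrow> pc c = 0" "b = [] \<Longrightarrow> vc b = 0" by auto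
    then show "real (pc (cons2 b c)) * real (vc (cons2 b c)) =
       real (pc b) * real (vc b) * 1 + real (pc b) * real (vc c) + real (pc b) * ee c + real (vc b) * real (pc c)
       + 1 * (real (pc c) * real (vc c)) + 1 * real (pc c) + zz b * real (vc c) + zz b * ee c"
      using o by (simp add: pc_cons2 vc_cons2 zz_def ee_def algebra_simps)
  next
    fix n show "(\<Sum>k\<le>n. \<Sum>b\<in>dyck_paths k. \<Sum>c\<in>dyck_paths (n-k).
       real (pc b) * real (vc b) * 1 + real (pc b) * real (vc c) + real (pc b) * ee c + real (vc b) * real (pc c)
       + 1 * (real (pc c) * real (vc c)) + 1 * real (pc c) + zz b * real (vc c) + zz b * ee c)
       = (UU * GG + PP * VV + PP * ST ee + VV * PP + GG * UU + GG * PP + ST zz * VV + ST zz * ST ee) $ n"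
      by (simp only: fps_add_nth prod_coeff sum.distrib)
  qed
  then show ?thesis by simp
qed

lemma M_eq: "MM = fps_X * (UU * GG + PP * VV + PP * ST ee + VV * HH + GG * MM + GG * HH)"
proof -
  have "MM = fps_const (real (hpc 0 []) * real (vc [])) + fps_X * (UU * GG + PP * VV + PP * ST ee + VV * HH + GG * MM + GG * HH)"
  proof (rule ST_eq)
    fix b c :: "bool list" assume o: "okh 0 b" "okh 0 c"
    have "c = [] \<Longrightarrow> hpc 0 c = 0" by auto
    then show "real (hpc 0 (cons2 b c)) * real (vc (cons2 b c)) =
       real (pc b) * real (vc b) * 1 + real (pc b) * real (vc c) + real (pc b) * ee c + real (vc b) * real (hpc 0 c)
       + 1 * (real (hpc 0 c) * real (vc c)) + 1 * real (hpc 0 c)"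
      using o by (simp add: hpc_cons2 vc_cons2 ee_def algebra_simps)
  next
    fix n show "(\<Sum>k\<le>n. \<Sum>b\<in>dyck_paths k. \<Sum>c\<in>dyck_paths (n-k).
       real (pc b) * real (vc b) * 1 + real (pc b) * real (vc c) + real (pc b) * ee c + real (vc b) * real (hpc 0 c)
       + 1 * (real (hpc 0 c) * real (vc c)) + 1 * real (hpc 0 c))
       = (UU * GG + PP * VV + PP * ST ee + VV * HH + GG * MM + GG * HH) $ n"
      by (simp only: fps_add_nth prod_coeff sum.distrib)
  qed
  then show ?thesis by simp
qed


lemma alg_main:
  fixes X G V P H U M :: "real fps"
  assumes g: "G = 1 + X*(G*G)"
    and v: "V = X * (V * G + G * V + G * (G - 1))"
    and p: "P = X * (P * G + G * P + 1 * G)"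
    and h: "H = X * (P * G + G * H)"
    and u: "U = X * (U * G + P * V + P * (G - 1) + V * P + G * U + G * P + 1 * V + 1 * (G - 1))"
    and m: "M = X * (U * G + P * V + P * (G - 1) + V * H + G * M + G * H)"
  shows "M * (1 - 2*X*G)^3 = (1 - 2*X*G)^3 - (1 - 6*X + 6*X^2)"
proof -
  define D where "D = 1 - 2*X*G"
  define E where "E = G - 1"
  have g1: "G * (1 - X*G) = 1" using g by algebra
  have vd: "V * D = X*G*E" using v unfolding D_def E_def by algebra
  have pd: "P * D = X*G" using p unfolding D_def by algebra
  have h2: "H = X*P*G^2" using h g1 by algebra
  have ud: "U * D = X*(2*P*V + P*E + G*P + V + E)" using u unfolding D_def E_def by algebra
  have m2: "M = X*G*(U*G + P*V + P*E + V*H + G*H)" using m g1 unfolding E_def by algebra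
  have "M * D^3 = X^2*G^2*(2*X^2*G^2*E + X*G*E*D + X*G^2*D + X*G*E*D + D^2*E) + X^3*G^3*E*D
     + X^2*G^2*E*D^2 + X^4*G^5*E*D + X^3*G^5*D^2"
    using m2 h2 ud pd vd by algebra
  also have "\<dots> = D^3 - (1 - 6*X + 6*X^2)"
    using g unfolding D_def E_def by algebra
  finally show ?thesis unfolding D_def .
qed


lemma central_rec_real: "(real n + 1) * real (2*(n+1) choose (n+1)) = (4*real n + 2) * real (2*n choose n)"
proof -
  have a: "real (2*(n+1) choose (n+1)) = fact (2*n+2) / (fact (n+1) * fact (n+1))"
    by (subst binomial_fact) auto
  have b: "real (2*n choose n) = fact (2*n) / (fact n * fact n)"
    by (subst binomial_fact) auto
  have f1: "(fact (2*n+2) :: real) = (2*real n+2) * (2*real n+1) * fact (2*n)"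
    by (simp add: fact_Suc algebra_simps numeral_2_eq_2)
  have f2: "(fact (n+1) :: real) = (real n + 1) * fact n" by (simp add: fact_Suc algebra_simps)
  have nz: "(fact n :: real) \<noteq> 0" "real n + 1 \<noteq> 0" by auto
  show ?thesis unfolding a b f1 f2 using nz
    by (simp add: divide_simps) (simp add: algebra_simps)
qed

lemma S_cube_coeff:
  fixes S :: "real fps"
  assumes s0: "S$0 = 1" and s2: "S^2 * (1 - 4*fps_X) = 1"
  shows "(S^3)$n = (2*real n + 1) * real (2*n choose n)"
proof -
  have "fps_deriv (S^2 * (1 - 4*fps_X)) = 0" using s2 by simp
  then have "(S * (fps_deriv S * (1 - 4*fps_X) - 2*S)) * 2 = 0"
    by (simp add: power2_eq_square algebra_simps)
  moreover have "S \<noteq> 0" using s0 by auto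
  moreover have "(2::real fps) \<noteq> 0"
  proof
    assume "(2::real fps) = 0"
    then have "(2::real fps) $ 0 = 0" by simp
    then show False by (simp add: numeral_fps_const)
  qed
  ultimately have "fps_deriv S * (1 - 4*fps_X) - 2*S = 0"
    by (simp only: mult_eq_0_iff) simp
  then have d: "fps_deriv S * (1 - 4*fps_X) = 2 * S" by simp
  have s3: "2 * S^3 = fps_deriv S"
  proof -
    have "2 * S^3 = fps_deriv S * (S^2 * (1 - 4*fps_X))"
      using d by algebra
    then show ?thesis using s2 by simp
  qed
  have rec: "(real n + 1) * S$(n+1) = (4*real n + 2) * S$n" for n
  proof -
    have d': "fps_deriv S - fps_X * (fps_const 4 * fps_deriv S) = fps_const 2 * S"
      using d by (simp add: numeral_fps_const algebra_simps)
    have "(fps_deriv S - fps_X * (fps_const 4 * fps_deriv S)) $ n = (fps_const 2 * S)$n"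
      using d' by simp
    then show ?thesis
      by (cases n) (simp_all add: algebra_simps)
  qed
  have sn: "S$n = real (2*n choose n)" for n
  proof (induction n)
    case 0 then show ?case using s0 by simp
  next
    case (Suc n)
    have c: "(real n + 1) * real (2*(n+1) choose (n+1)) = (4*real n + 2) * real (2*n choose n)"
      by (rule central_rec_real)
    have "(real n + 1) * S$(n+1) = (real n + 1) * real (2*(n+1) choose (n+1))"
      using rec[of n] Suc c by simp
    then have "S$(n+1) = real (2*(n+1) choose (n+1))"
      by (metis add_nonneg_pos mult_cancel_left not_one_le_zero of_nat_0_le_iff order_less_le zero_less_one)
    then show ?case by simp
  qed
  have "fps_const 2 * S^3 = fps_deriv S" using s3 by (simp add: numeral_fps_const)
  then have "(fps_const 2 * S^3) $ n = (fps_deriv S) $ n" by simp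
  then have "2 * (S^3) $ n = (real n + 1) * S$(n+1)" by simp
  also have "\<dots> = (4*real n + 2) * real (2*n choose n)" using rec[of n] sn by simp
  finally show ?thesis by (simp add: algebra_simps)
qed


definition aa :: "nat \<Rightarrow> real" where "aa n = (2*real n + 1) * real (2*n choose n)"

lemma sc2_MM: "real (sc2 n) = MM $ n"
  by (simp add: sc2_sum ST_nth card_HPs card_Vs)

lemma MM_closed: "MM = 1 - (1 - 6*fps_X + 6*fps_X^2) * (inverse (1 - 2*fps_X*GG))^3"
proof -
  define D where "D = 1 - 2*fps_X*GG"
  define S where "S = inverse D"
  have m: "MM * D^3 = D^3 - (1 - 6*fps_X + 6*fps_X^2)"
    unfolding D_def
    by (rule alg_main[OF G_eq V_eq[unfolded ST_ee] P_eq[unfolded ST_zz] H_eq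
          U_eq[unfolded ST_zz ST_ee] M_eq[unfolded ST_ee]])
  have d0: "D $ 0 = 1" by (simp add: D_def)
  have sd: "S * D = 1" unfolding S_def by (rule inverse_mult_eq_1) (simp add: d0)
  have "MM = MM * (S*D)^3" using sd by simp
  also have "\<dots> = S^3 * (MM * D^3)" by (simp add: power_mult_distrib ac_simps)
  also have "\<dots> = (S*D)^3 - (1 - 6*fps_X + 6*fps_X^2) * S^3" using m by algebra
  finally show ?thesis using sd unfolding S_def D_def by simp
qed

lemma S_props: "(inverse (1 - 2*fps_X*GG)) $ 0 = 1"
    "(inverse (1 - 2*fps_X*GG))^2 * (1 - 4*fps_X) = 1"
proof -
  define D where "D = 1 - 2*fps_X*GG"
  define S where "S = inverse D"
  have d0: "D $ 0 = 1" by (simp add: D_def)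
  have sd: "S * D = 1" unfolding S_def by (rule inverse_mult_eq_1) (simp add: d0)
  have d2: "D^2 = 1 - 4*fps_X" using G_eq unfolding D_def by algebra
  show "(inverse (1 - 2*fps_X*GG)) $ 0 = 1" using d0 unfolding D_def by simp
  have "S^2 * D^2 = 1" using sd by (simp add: power_mult_distrib[symmetric])
  then show "(inverse (1 - 2*fps_X*GG))^2 * (1 - 4*fps_X) = 1" using d2 unfolding S_def D_def by simp
qed

lemma sc2_coeff: "real (sc2 n) = (if n = 0 then 1 else 0) - aa n + (if n = 0 then 0 else 6 * aa (n-1))
    - (if n < 2 then 0 else 6 * aa (n-2))"
proof -
  define S where "S = inverse (1 - 2*fps_X*GG :: real fps)"
  have c: "(S^3) $ k = aa k" for k
    unfolding aa_def S_def using S_cube_coeff[OF S_props] by simp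
  have "MM = 1 - (S^3 - fps_X * (fps_const 6 * S^3) + fps_X^2 * (fps_const 6 * S^3))"
    using MM_closed unfolding S_def by (simp add: numeral_fps_const algebra_simps)
  then have "MM $ n = (1 - (S^3 - fps_X * (fps_const 6 * S^3) + fps_X^2 * (fps_const 6 * S^3))) $ n"
    by simp
  also have "\<dots> = (if n = 0 then 1 else 0) - aa n + (if n = 0 then 0 else 6 * aa (n-1))
    - (if n < 2 then 0 else 6 * aa (n-2))"
    by (simp add: fps_X_power_mult_nth c)
  finally show ?thesis by (simp add: sc2_MM)
qed


lemma aa_rec: "(real k + 1) * aa (Suc k) = (4*real k + 6) * aa k"
proof -
  have "(real k + 1) * aa (Suc k) = (2*real k + 3) * ((real k + 1) * real (2*(k+1) choose (k+1)))"
    by (simp add: aa_def algebra_simps)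
  also have "\<dots> = (2*real k + 3) * ((4*real k + 2) * real (2*k choose k))"
    by (simp only: central_rec_real)
  also have "\<dots> = (4*real k + 6) * aa k" by (simp add: aa_def algebra_simps)
  finally show ?thesis .
qed

lemma gchoose_aa: "((-3/2::real) gchoose k) * (-4)^k = aa k"
proof (induction k)
  case 0 then show ?case by (simp add: aa_def)
next
  case (Suc k)
  have ab: "of_nat (Suc k) * (a gchoose Suc k) = (a - of_nat k) * (a gchoose k)" for a :: real
    using gbinomial_absorption[of k a] gbinomial_absorb_comp[of a k] by simp
  have ab': "(real k + 1) * ((-3/2::real) gchoose Suc k) = (-3/2 - real k) * ((-3/2::real) gchoose k)"
    using ab[of "-3/2"] by (simp add: add.commute)
  have "(real k + 1) * (((-3/2::real) gchoose Suc k) * (-4)^Suc k)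
      = ((real k + 1) * ((-3/2::real) gchoose Suc k)) * ((-4) * (-4)^k)"
    by (simp only: power_Suc ac_simps)
  also have "\<dots> = ((-3/2 - real k) * ((-3/2::real) gchoose k)) * (-4) * (-4)^k"
    by (simp only: ab')
  also have "\<dots> = (4*real k + 6) * (((-3/2::real) gchoose k) * (-4)^k)" by (simp add: algebra_simps)
  also have "\<dots> = (real k + 1) * aa (Suc k)" using Suc aa_rec by simp
  finally show ?case by (metis add_nonneg_pos mult_cancel_left not_one_le_zero of_nat_0_le_iff order_less_le zero_less_one)
qed

lemma aa_series:
  assumes x: "\<bar>x::real\<bar> < 1/4"
  shows "(\<lambda>n. aa n * x^n) sums (1 / ((1 - 4*x) * sqrt (1 - 4*x)))"
proof -
  have "\<bar>-4*x\<bar> < 1" using x by simp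
  from gen_binomial_real[OF this, of "-3/2"]
  have "(\<lambda>n. ((-3/2) gchoose n) * (-4*x)^n) sums (1 + -4*x) powr (-3/2)" .
  moreover have "((-3/2) gchoose n) * (-4*x)^n = aa n * x^n" for n
  proof -
    have "(-4*x)^n = (-4)^n * x^n" by (rule power_mult_distrib)
    then show ?thesis using gchoose_aa[of n] by (simp only: mult.assoc[symmetric])
  qed
  moreover have "(1 + -4*x) powr (-3/2) = 1 / ((1 - 4*x) * sqrt (1 - 4*x))"
  proof -
    have p: "1 - 4*x > 0" using x by simp
    have "(1 - 4*x) powr (3/2) = (1 - 4*x) powr (1 + 1/2)" by simp
    also have "\<dots> = (1 - 4*x) powr 1 * (1 - 4*x) powr (1/2)"
      by (rule powr_add)
    also have "\<dots> = (1 - 4*x) * sqrt (1 - 4*x)" using p by (simp add: powr_half_sqrt)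
    finally have "(1 - 4*x) powr (3/2) = (1 - 4*x) * sqrt (1 - 4*x)" .
    then show ?thesis using p by (simp add: powr_minus_divide)
  qed
  ultimately show ?thesis by simp
qed


lemma part2: "n \<ge> 1 \<Longrightarrow> real (sc2 n) = real (2*n choose n) * ((real n - 1) * (real n - 2)) / (2 * (2 * real n - 1))"
proof -
  assume n: "n \<ge> 1"
  show ?thesis
  proof (cases "n = 1")
    case True then show ?thesis by (simp add: sc2_coeff aa_def)
  next
    case False
    then obtain m where m: "n = m + 2" using n by (metis add.commute le_Suc_ex one_add_one le_antisym not_less_eq_eq plus_1_eq_Suc)
    define c where "c = real (2*m choose m)"
    define c1 where "c1 = real (2*(m+1) choose (m+1))"
    define c2 where "c2 = real (2*(m+2) choose (m+2))"
    have r1: "(real m + 1) * c1 = (4*real m + 2) * c" unfolding c_def c1_def by (rule central_rec_real)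
    have r2: "(real m + 2) * c2 = (4*real m + 6) * c1"
      using central_rec_real[of "m+1"] unfolding c1_def c2_def by (simp add: algebra_simps)
    have e1: "c = (real m + 1) * c1 / (4*real m + 2)" using r1 by (simp add: field_simps)
    have e2: "c2 = (4*real m + 6) * c1 / (real m + 2)" using r2 by (simp add: field_simps)
    have s: "real (sc2 n) = - ((2*real m + 5) * c2) + 6 * ((2*real m + 3) * c1) - 6 * ((2*real m + 1) * c)"
      using m by (simp add: sc2_coeff aa_def c_def c1_def c2_def algebra_simps numeral_2_eq_2)
    have rhs: "real (2*n choose n) * ((real n - 1) * (real n - 2)) / (2 * (2 * real n - 1))
       = c2 * ((real m + 1) * real m) / (2 * (2 * real m + 3))"
      using m by (simp add: c2_def algebra_simps)
    have nz: "real m + 2 \<noteq> 0" "2*real m + 3 \<noteq> 0" by (simp_all add: add_pos_pos)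
    have Ls: "real (sc2 n) * (real m + 2) = real m * (real m + 1) * c1"
      using s r1 r2 by algebra
    have Rs: "(c2 * ((real m + 1) * real m) / (2 * (2 * real m + 3))) * (real m + 2) = real m * (real m + 1) * c1"
    proof -
      have "(c2 * ((real m + 1) * real m) / (2 * (2 * real m + 3))) * (real m + 2)
         = ((real m + 2) * c2) * ((real m + 1) * real m) / (2 * (2 * real m + 3))" by (simp add: algebra_simps)
      also have "\<dots> = (4*real m + 6) * c1 * ((real m + 1) * real m) / (2 * (2 * real m + 3))" using r2 by simp
      also have "\<dots> = real m * (real m + 1) * c1" using nz by (simp add: field_simps)
      finally show ?thesis .
    qed
    have "real (sc2 n) * (real m + 2) = (c2 * ((real m + 1) * real m) / (2 * (2 * real m + 3))) * (real m + 2)"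
      using Ls Rs by simp
    then show ?thesis unfolding rhs using mult_right_cancel[OF nz(1)] by blast
  qed
qed

lemma part1:
  assumes x: "\<bar>x::real\<bar> < 1/4"
  shows "(\<lambda>n. real (sc2 n) * x ^ n) sums
             ((1 - 6*x + 6*x^2 - (1 - 4*x) * sqrt (1 - 4*x)) / (- ((1 - 4*x) * sqrt (1 - 4*x))))"
proof -
  define A where "A = 1 / ((1 - 4*x) * sqrt (1 - 4*x))"
  have f: "(\<lambda>n. aa n * x^n) sums A" unfolding A_def by (rule aa_series[OF x])
  define h where "h n = (if n = 0 then 0 else 6 * aa (n-1) * x^n)" for n
  define k where "k n = (if n < 2 then 0 else 6 * aa (n-2) * x^n)" for n
  have "(\<lambda>n. h (Suc n)) sums (6*x*A)"
  proof -
    have "(\<lambda>n. (6*x) * (aa n * x^n)) sums (6*x*A)" by (rule sums_mult[OF f])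
    moreover have "h (Suc n) = (6*x) * (aa n * x^n)" for n by (simp add: h_def)
    ultimately show ?thesis by simp
  qed
  then have "h sums (6*x*A + h 0)" by (simp only: sums_Suc_iff)
  then have hs: "h sums (6*x*A)" by (simp add: h_def)
  have "(\<lambda>n. k (Suc n)) sums (x*(6*x*A))"
  proof -
    have "(\<lambda>n. x * h n) sums (x*(6*x*A))" by (rule sums_mult[OF hs])
    moreover have "k (Suc n) = x * h n" for n by (cases n) (simp_all add: h_def k_def)
    ultimately show ?thesis by simp
  qed
  then have "k sums (x*(6*x*A) + k 0)" by (simp only: sums_Suc_iff)
  then have ks: "k sums (x*(6*x*A))" by (simp add: k_def)
  have es: "(\<lambda>n. if n = 0 then 1 else 0) sums (1::real)"
    using sums_single[of 0 "\<lambda>_. 1::real"] by simp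
  have tot: "(\<lambda>n. (if n = 0 then 1 else 0) - aa n * x^n + h n - k n) sums (1 - A + 6*x*A - x*(6*x*A))"
    by (intro sums_diff sums_add es f hs ks)
  have eq: "real (sc2 n) * x ^ n = (if n = 0 then 1 else 0) - aa n * x^n + h n - k n" for n
    by (simp add: sc2_coeff h_def k_def algebra_simps)
  have p: "1 - 4*x > 0" using x by simp
  then have nz: "(1 - 4*x) * sqrt (1 - 4*x) \<noteq> 0" by simp
  have val: "1 - A + 6*x*A - x*(6*x*A) = (1 - 6*x + 6*x^2 - (1 - 4*x) * sqrt (1 - 4*x)) / (- ((1 - 4*x) * sqrt (1 - 4*x)))"
  proof -
    have gen: "1 - 1/q + 6*x*(1/q) - x*(6*x*(1/q)) = (1 - 6*x + 6*x^2 - q) / (-q)" if "q \<noteq> 0" for q :: real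
      using that by (simp add: field_simps power2_eq_square)
    show ?thesis unfolding A_def by (rule gen[OF nz])
  qed
  show ?thesis using tot unfolding eq[symmetric] val .
qed

theorem mainTheorem4:
  shows "(\<forall>x::real. \<bar>x\<bar> < 1/4 \<longrightarrow>
           (\<lambda>n. real (sc2 n) * x ^ n) sums
             ((1 - 6*x + 6*x^2 - (1 - 4*x) * sqrt (1 - 4*x)) / (- ((1 - 4*x) * sqrt (1 - 4*x)))))
       \<and> (\<forall>n\<ge>1. real (sc2 n) = real (2*n choose n) * ((real n - 1) * (real n - 2)) / (2 * (2 * real n - 1)))"
  using part1 part2 by blast


end
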